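(* Let $(\mathfrak g,\mathfrak g^* )$ be a Hom-Lie bialgebra (with $\mathfrak g$ finite-dimensional, Hom-Lie algebras $(\mathfrak{g},[\cdot,\cdot]_{\mathfrak{g}},\phi_{\mathfrak{g}})$ and $(\mathfrak g^*,[\cdot,\cdot]_{\mathfrak g^*},\phi_{\mathfrak g}^* )$ and cobracket $\Delta$). Then the canonical structure on $\mathfrak g\oplus\mathfrak g^*$ described below is a Hom-Lie bialgebra, and the maps $\mathfrak g\to\mathfrak g\oplus\mathfrak g^*$, $x\mapsto\phi_{\mathfrak g}(x)$, and $\mathfrak g^*\to\mathfrak g\oplus\mathfrak g^*$, $a\mapsto\phi_{\mathfrak g}^*(a)$, are homomorphisms of Hom-Lie bialgebras from $(\mathfrak g,\Delta)$ and from $(\mathfrak g^*,-\Delta_{\mathfrak g^*})$ respectively, where $\langle\Delta_{\mathfrak g^*}(a),x\otimes y\rangle=\langle a,[x,y]_{\mathfrak g}\rangle$.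
   Context: A Hom-Lie algebra $(\mathfrak{h},[\cdot,\cdot]_{\mathfrak{h}},\phi_{\mathfrak{h}})$: skew-symmetric bilinear bracket and linear map $\phi_{\mathfrak h}$ with $\phi_{\mathfrak h}[x,y]=[\phi_{\mathfrak h}x,\phi_{\mathfrak h}y]$ and $[\phi_{\mathfrak h}(x),[y,z]]+[\phi_{\mathfrak h}(y),[z,x]]+[\phi_{\mathfrak h}(z),[x,y]]=0$; weakly involutive if $[\phi_{\mathfrak h}^2(x),y]=[x,y]$. For $z\in\mathfrak h$, $t\in\mathfrak h\otimes\mathfrak h$: $\mathrm{ad}_zt=(\mathrm{ad}_z\otimes\phi_{\mathfrak h}+\phi_{\mathfrak h}\otimes\mathrm{ad}_z)t$, $\mathrm{ad}_zy=[z,y]$. A Hom-Lie bialgebra $(\mathfrak h,\Delta_{\mathfrak h})$ (finite-dimensional) is a weakly involutive Hom-Lie algebra $\mathfrak h$ with a linear map $\Delta_{\mathfrak h}:\mathfrak h\to\mathfrak h\otimes\mathfrak h$ such that $\mathfrak h^*$ with bracket $\langle[a,b]_{\mathfrak h^*},x\rangle=\langle\Delta_{\mathfrak h}(x),a\otimes b\rangle$ and map $\phi_{\mathfrak h}^*$ is a weakly involutive Hom-Lie algebra and $\Delta_{\mathfrak h}[x,y]=\mathrm{ad}_{\phi_{\mathfrak h}(x)}\Delta_{\mathfrak h}(y)-\mathrm{ad}_{\phi_{\mathfrak h}(y)}\Delta_{\mathfrak h}(x)$; we also write $(\mathfrak h,\mathfrak h^* )$. A homomorphism of Hom-Lie bialgebras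 $f:(\mathfrak h,\Delta_{\mathfrak h})\to(\mathfrak k,\Delta_{\mathfrak k})$ is a linear map with $f[x,y]=[f(x),f(y)]$, $f\phi_{\mathfrak h}=\phi_{\mathfrak k}f$ and $(f\otimes f)\Delta_{\mathfrak h}=\Delta_{\mathfrak k}f$. Canonical structure: let $\mathrm{ad}^\circ_xa\in\mathfrak g^*$ be defined by $\langle\mathrm{ad}^\circ_xa,y\rangle=-\langle a,[\phi_{\mathfrak g}(x),y]_{\mathfrak g}\rangle$ and $\mathfrak{ad}^\circ_ax\in\mathfrak g$ by $\langle\mathfrak{ad}^\circ_ax,b\rangle=-\langle x,[\phi_{\mathfrak g}^*(a),b]_{\mathfrak g^*}\rangle$. On $\mathfrak g\oplus\mathfrak g^*$ take the bracket $[x+a,y+b]_d=[x,y]_{\mathfrak g}+\mathrm{ad}^\circ_xb-\mathrm{ad}^\circ_ya+[a,b]_{\mathfrak g^*}+\mathfrak{ad}^\circ_ay-\mathfrak{ad}^\circ_bx$ and twisting map $\phi_{\mathfrak g}\oplus\phi_{\mathfrak g}^*$; with $\{e_i\}$ a basis of $\mathfrak g$, $\{f_i\}$ the dual basis and $r=\sum_ie_i\otimes f_i$, the cobracket is $\Delta_{\mathcal{HD}}(u)=(\mathrm{ad}_u\otimes(\phi_{\mathfrak g}\oplus\phi_{\mathfrak g}^* )+(\phi_{\mathfrak g}\oplus\phi_{\mathfrak g}^* )\otimes\mathrm{ad}_u)r$ for $u\in\mathfrak g\oplus\mathfrak g^*$ (ad taken in the bracket $[\cdot,\cdot]_d$).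 *)

theory Defs
  imports Main
begin

text \<open>A finite-dimensional vector space over a field 'k is modelled as the coordinate
space of functions 'i \<Rightarrow> 'k for a finite index type 'i (the basis e_i = unitv i).
Tensors in h \<otimes> h are modelled as 'i \<Rightarrow> 'i \<Rightarrow> 'k, with u \<otimes> v = (\<lambda>i j. u i * v j).
The dual space h* is again 'i \<Rightarrow> 'k with the coordinate pairing (dual basis f_i = unitv i).\<close>

definition lin :: "(('i \<Rightarrow> 'k::field) \<Rightarrow> ('j \<Rightarrow> 'k)) \<Rightarrow> bool" where
  "lin f \<longleftrightarrow> (\<forall>x y. f (\<lambda>i. x i + y i) = (\<lambda>j. f x j + f y j)) \<and>
               (\<forall>c x. f (\<lambda>i. c * x i) = (\<lambda>j. c * f x j))"

definition lin2 :: "(('i \<Rightarrow> 'k::field) \<Rightarrow> ('j \<Rightarrow> 'j \<Rightarrow> 'k)) \<Rightarrow> bool" where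
  "lin2 f \<longleftrightarrow> (\<forall>x y. f (\<lambda>i. x i + y i) = (\<lambda>p q. f x p q + f y p q)) \<and>
               (\<forall>c x. f (\<lambda>i. c * x i) = (\<lambda>p q. c * f x p q))"

definition bilin :: "(('i \<Rightarrow> 'k::field) \<Rightarrow> ('i \<Rightarrow> 'k) \<Rightarrow> ('i \<Rightarrow> 'k)) \<Rightarrow> bool" where
  "bilin br \<longleftrightarrow> (\<forall>x. lin (br x)) \<and> (\<forall>y. lin (\<lambda>x. br x y))"

definition unitv :: "'i \<Rightarrow> ('i \<Rightarrow> 'k::field)" where
  "unitv p = (\<lambda>k. if k = p then 1 else 0)"

definition pair :: "('i::finite \<Rightarrow> 'k::field) \<Rightarrow> ('i \<Rightarrow> 'k) \<Rightarrow> 'k" where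
  "pair a x = (\<Sum>i\<in>UNIV. a i * x i)"

definition tmap :: "(('i::finite \<Rightarrow> 'k::field) \<Rightarrow> ('j \<Rightarrow> 'k)) \<Rightarrow> (('i \<Rightarrow> 'k) \<Rightarrow> ('j \<Rightarrow> 'k))
     \<Rightarrow> ('i \<Rightarrow> 'i \<Rightarrow> 'k) \<Rightarrow> ('j \<Rightarrow> 'j \<Rightarrow> 'k)" where
  "tmap f g t = (\<lambda>i j. \<Sum>p\<in>UNIV. \<Sum>q\<in>UNIV. t p q * f (unitv p) i * g (unitv q) j)"

definition ad_t :: "(('i::finite \<Rightarrow> 'k::field) \<Rightarrow> ('i \<Rightarrow> 'k) \<Rightarrow> ('i \<Rightarrow> 'k)) \<Rightarrow> (('i \<Rightarrow> 'k) \<Rightarrow> ('i \<Rightarrow> 'k))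
     \<Rightarrow> ('i \<Rightarrow> 'k) \<Rightarrow> ('i \<Rightarrow> 'i \<Rightarrow> 'k) \<Rightarrow> ('i \<Rightarrow> 'i \<Rightarrow> 'k)" where
  "ad_t br phi z t = (\<lambda>i j. tmap (br z) phi t i j + tmap phi (br z) t i j)"

definition dual_map :: "(('i::finite \<Rightarrow> 'k::field) \<Rightarrow> ('i \<Rightarrow> 'k)) \<Rightarrow> ('i \<Rightarrow> 'k) \<Rightarrow> ('i \<Rightarrow> 'k)" where
  "dual_map phi a = (\<lambda>i. pair a (phi (unitv i)))"

text \<open>bracket on h*: \<langle>[a,b], x\<rangle> = \<langle>\<Delta> x, a \<otimes> b\<rangle>\<close>
definition dual_br :: "(('i::finite \<Rightarrow> 'k::field) \<Rightarrow> ('i \<Rightarrow> 'i \<Rightarrow> 'k))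
     \<Rightarrow> ('i \<Rightarrow> 'k) \<Rightarrow> ('i \<Rightarrow> 'k) \<Rightarrow> ('i \<Rightarrow> 'k)" where
  "dual_br D a b = (\<lambda>k. \<Sum>i\<in>UNIV. \<Sum>j\<in>UNIV. D (unitv k) i j * a i * b j)"

definition dual_cobr :: "(('i::finite \<Rightarrow> 'k::field) \<Rightarrow> ('i \<Rightarrow> 'k) \<Rightarrow> ('i \<Rightarrow> 'k))
     \<Rightarrow> ('i \<Rightarrow> 'k) \<Rightarrow> ('i \<Rightarrow> 'i \<Rightarrow> 'k)" where
  "dual_cobr br a = (\<lambda>i j. pair a (br (unitv i) (unitv j)))"

definition hom_lie :: "(('i \<Rightarrow> 'k::field) \<Rightarrow> ('i \<Rightarrow> 'k) \<Rightarrow> ('i \<Rightarrow> 'k)) \<Rightarrow> (('i \<Rightarrow> 'k) \<Rightarrow> ('i \<Rightarrow> 'k)) \<Rightarrow> bool" where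
  "hom_lie br phi \<longleftrightarrow> bilin br \<and> (\<forall>x y. br x y = (\<lambda>i. - br y x i)) \<and> lin phi \<and>
     (\<forall>x y. phi (br x y) = br (phi x) (phi y)) \<and>
     (\<forall>x y z. (\<lambda>i. br (phi x) (br y z) i + br (phi y) (br z x) i + br (phi z) (br x y) i) = (\<lambda>i. 0))"

definition weak_inv :: "(('i \<Rightarrow> 'k::field) \<Rightarrow> ('i \<Rightarrow> 'k) \<Rightarrow> ('i \<Rightarrow> 'k)) \<Rightarrow> (('i \<Rightarrow> 'k) \<Rightarrow> ('i \<Rightarrow> 'k)) \<Rightarrow> bool" where
  "weak_inv br phi \<longleftrightarrow> (\<forall>x y. br (phi (phi x)) y = br x y)"

definition hom_lie_bialg :: "(('i::finite \<Rightarrow> 'k::field) \<Rightarrow> ('i \<Rightarrow> 'k) \<Rightarrow> ('i \<Rightarrow> 'k)) \<Rightarrow> (('i \<Rightarrow> 'k) \<Rightarrow> ('i \<Rightarrow> 'k))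
     \<Rightarrow> (('i \<Rightarrow> 'k) \<Rightarrow> ('i \<Rightarrow> 'i \<Rightarrow> 'k)) \<Rightarrow> bool" where
  "hom_lie_bialg br phi D \<longleftrightarrow> hom_lie br phi \<and> weak_inv br phi \<and> lin2 D \<and>
     hom_lie (dual_br D) (dual_map phi) \<and> weak_inv (dual_br D) (dual_map phi) \<and>
     (\<forall>x y. D (br x y) = (\<lambda>i j. ad_t br phi (phi x) (D y) i j - ad_t br phi (phi y) (D x) i j))"

definition bialg_hom :: "(('i::finite \<Rightarrow> 'k::field) \<Rightarrow> ('i \<Rightarrow> 'k) \<Rightarrow> ('i \<Rightarrow> 'k)) \<Rightarrow> (('i \<Rightarrow> 'k) \<Rightarrow> ('i \<Rightarrow> 'k))
     \<Rightarrow> (('i \<Rightarrow> 'k) \<Rightarrow> ('i \<Rightarrow> 'i \<Rightarrow> 'k))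
     \<Rightarrow> (('j::finite \<Rightarrow> 'k) \<Rightarrow> ('j \<Rightarrow> 'k) \<Rightarrow> ('j \<Rightarrow> 'k)) \<Rightarrow> (('j \<Rightarrow> 'k) \<Rightarrow> ('j \<Rightarrow> 'k))
     \<Rightarrow> (('j \<Rightarrow> 'k) \<Rightarrow> ('j \<Rightarrow> 'j \<Rightarrow> 'k)) \<Rightarrow> (('i \<Rightarrow> 'k) \<Rightarrow> ('j \<Rightarrow> 'k)) \<Rightarrow> bool" where
  "bialg_hom br1 phi1 D1 br2 phi2 D2 f \<longleftrightarrow> lin f \<and>
     (\<forall>x y. f (br1 x y) = br2 (f x) (f y)) \<and> (\<forall>x. f (phi1 x) = phi2 (f x)) \<and>
     (\<forall>x. tmap f f (D1 x) = D2 (f x))"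

subsection \<open>The double g \<oplus> g*, indexed by 'i + 'i (Inl: g-part, Inr: g*-part)\<close>

definition gpart :: "('i + 'i \<Rightarrow> 'k) \<Rightarrow> ('i \<Rightarrow> 'k)" where "gpart u = (\<lambda>i. u (Inl i))"
definition dpart :: "('i + 'i \<Rightarrow> 'k) \<Rightarrow> ('i \<Rightarrow> 'k)" where "dpart u = (\<lambda>i. u (Inr i))"
definition mkd :: "('i \<Rightarrow> 'k) \<Rightarrow> ('i \<Rightarrow> 'k) \<Rightarrow> ('i + 'i \<Rightarrow> 'k)" where
  "mkd x a = (\<lambda>s. case s of Inl i \<Rightarrow> x i | Inr i \<Rightarrow> a i)"

definition coad :: "(('i::finite \<Rightarrow> 'k::field) \<Rightarrow> ('i \<Rightarrow> 'k) \<Rightarrow> ('i \<Rightarrow> 'k)) \<Rightarrow> (('i \<Rightarrow> 'k) \<Rightarrow> ('i \<Rightarrow> 'k))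
     \<Rightarrow> ('i \<Rightarrow> 'k) \<Rightarrow> ('i \<Rightarrow> 'k) \<Rightarrow> ('i \<Rightarrow> 'k)" where
  "coad br phi x a = (\<lambda>j. - pair a (br (phi x) (unitv j)))"

definition dbr :: "(('i::finite \<Rightarrow> 'k::field) \<Rightarrow> ('i \<Rightarrow> 'k) \<Rightarrow> ('i \<Rightarrow> 'k)) \<Rightarrow> (('i \<Rightarrow> 'k) \<Rightarrow> ('i \<Rightarrow> 'k))
     \<Rightarrow> (('i \<Rightarrow> 'k) \<Rightarrow> ('i \<Rightarrow> 'i \<Rightarrow> 'k))
     \<Rightarrow> ('i + 'i \<Rightarrow> 'k) \<Rightarrow> ('i + 'i \<Rightarrow> 'k) \<Rightarrow> ('i + 'i \<Rightarrow> 'k)" where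
  "dbr br phi D u v =
     (let x = gpart u; a = dpart u; y = gpart v; b = dpart v;
          brs = dual_br D; phis = dual_map phi in
      mkd (\<lambda>i. br x y i + coad brs phis a y i - coad brs phis b x i)
          (\<lambda>i. coad br phi x b i - coad br phi y a i + brs a b i))"

definition dphi :: "(('i::finite \<Rightarrow> 'k::field) \<Rightarrow> ('i \<Rightarrow> 'k)) \<Rightarrow> ('i + 'i \<Rightarrow> 'k) \<Rightarrow> ('i + 'i \<Rightarrow> 'k)" where
  "dphi phi u = mkd (phi (gpart u)) (dual_map phi (dpart u))"

text \<open>r = \<Sum>_i e_i \<otimes> f_i\<close>
definition rcan :: "'i + 'i \<Rightarrow> 'i + 'i \<Rightarrow> 'k::field" where
  "rcan s t = (case (s, t) of (Inl i, Inr j) \<Rightarrow> (if i = j then 1 else 0) | _ \<Rightarrow> 0)"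

definition dcobr :: "(('i::finite \<Rightarrow> 'k::field) \<Rightarrow> ('i \<Rightarrow> 'k) \<Rightarrow> ('i \<Rightarrow> 'k)) \<Rightarrow> (('i \<Rightarrow> 'k) \<Rightarrow> ('i \<Rightarrow> 'k))
     \<Rightarrow> (('i \<Rightarrow> 'k) \<Rightarrow> ('i \<Rightarrow> 'i \<Rightarrow> 'k))
     \<Rightarrow> ('i + 'i \<Rightarrow> 'k) \<Rightarrow> ('i + 'i \<Rightarrow> 'i + 'i \<Rightarrow> 'k)" where
  "dcobr br phi D u = ad_t (dbr br phi D) (dphi phi) u rcan"

definition inj_g :: "(('i \<Rightarrow> 'k::field) \<Rightarrow> ('i \<Rightarrow> 'k)) \<Rightarrow> ('i \<Rightarrow> 'k) \<Rightarrow> ('i + 'i \<Rightarrow> 'k)" where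
  "inj_g phi x = mkd (phi x) (\<lambda>i. 0)"

definition inj_d :: "(('i::finite \<Rightarrow> 'k::field) \<Rightarrow> ('i \<Rightarrow> 'k)) \<Rightarrow> ('i \<Rightarrow> 'k) \<Rightarrow> ('i + 'i \<Rightarrow> 'k)" where
  "inj_d phi a = mkd (\<lambda>i. 0) (dual_map phi a)"

end

theory Submission
  imports Defs
begin


lemma sum_unit_right[simp]: "(\<Sum>i\<in>UNIV. (f::'i::finite\<Rightarrow>'k::field) i * (if i = p then 1 else 0)) = f p"
  by (simp add: if_distrib[of "\<lambda>x. _ * x"] cong: if_cong)
lemma sum_unit_left[simp]: "(\<Sum>i\<in>UNIV. (if i = p then 1 else 0) * (f::'i::finite\<Rightarrow>'k::field) i) = f p"
  by (simp add: if_distrib[of "\<lambda>x. x * _"] cong: if_cong)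

lemma pair_unit_l[simp]: "pair (unitv k) x = x k"
  by (simp add: pair_def unitv_def)
lemma pair_unit_r[simp]: "pair x (unitv k) = x k"
  by (simp add: pair_def unitv_def)
lemma pair_sym: "pair a x = pair x a"
  by (simp add: pair_def mult.commute)


lemma sum_swap_in: "(\<Sum>i\<in>A. \<Sum>j\<in>B. \<Sum>p\<in>C. F i j p) = (\<Sum>i\<in>A. \<Sum>p\<in>C. \<Sum>j\<in>B. F i j p)"
  by (rule sum.cong[OF refl], rule sum.swap)
lemma sum4_swap: "(\<Sum>i\<in>A. \<Sum>j\<in>B. \<Sum>p\<in>C. \<Sum>q\<in>E. F i j p q) = (\<Sum>p\<in>C. \<Sum>q\<in>E. \<Sum>i\<in>A. \<Sum>j\<in>B. F i j p q)"
proof -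
  have "(\<Sum>i\<in>A. \<Sum>j\<in>B. \<Sum>p\<in>C. \<Sum>q\<in>E. F i j p q) = (\<Sum>i\<in>A. \<Sum>p\<in>C. \<Sum>j\<in>B. \<Sum>q\<in>E. F i j p q)"
    by (rule sum_swap_in)
  also have "\<dots> = (\<Sum>i\<in>A. \<Sum>p\<in>C. \<Sum>q\<in>E. \<Sum>j\<in>B. F i j p q)"
    by (rule sum.cong[OF refl], rule sum_swap_in)
  also have "\<dots> = (\<Sum>p\<in>C. \<Sum>i\<in>A. \<Sum>q\<in>E. \<Sum>j\<in>B. F i j p q)"
    by (rule sum.swap)
  also have "\<dots> = (\<Sum>p\<in>C. \<Sum>q\<in>E. \<Sum>i\<in>A. \<Sum>j\<in>B. F i j p q)"
    by (rule sum.cong[OF refl], rule sum.swap)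
  finally show ?thesis .
qed
lemma sum_UNIV_Plus: "(\<Sum>s\<in>(UNIV::('a::finite + 'b::finite) set). g s) = (\<Sum>i\<in>UNIV. g (Inl i)) + (\<Sum>i\<in>UNIV. g (Inr i))"
  using sum.Plus[of "UNIV::'a set" "UNIV::'b set" g] by (simp add: o_def)



lemma lin_add: "lin f \<Longrightarrow> f (\<lambda>i. x i + y i) = (\<lambda>j. f x j + f y j)"
  by (simp add: lin_def)
lemma lin_smult: "lin f \<Longrightarrow> f (\<lambda>i. c * x i) = (\<lambda>j. c * f x j)"
  by (simp add: lin_def)
lemma lin_zero: "lin f \<Longrightarrow> f (\<lambda>i. 0) = (\<lambda>j. 0)"
  using lin_smult[of f 0 "\<lambda>i. 0"] by simp
lemma lin_neg: "lin f \<Longrightarrow> f (\<lambda>i. - x i) = (\<lambda>j. - f x j)"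
  using lin_smult[of f "-1" x] by simp
lemma lin_diff: "lin f \<Longrightarrow> f (\<lambda>i. x i - y i) = (\<lambda>j. f x j - f y j)"
proof -
  assume l: "lin f"
  have "f (\<lambda>i. x i - y i) = f (\<lambda>i. x i + (\<lambda>i. - y i) i)" by simp
  also have "\<dots> = (\<lambda>j. f x j + f (\<lambda>i. - y i) j)" using lin_add[OF l, of x "\<lambda>i. - y i"] by simp
  also have "\<dots> = (\<lambda>j. f x j - f y j)" using lin_neg[OF l, of y] by simp
  finally show ?thesis .
qed

lemma lin_sum: assumes "lin f" "finite A" shows
   "f (\<lambda>k. \<Sum>p\<in>A. c p * v p k) = (\<lambda>j. \<Sum>p\<in>A. c p * f (v p) j)"
  using assms(2) proof (induction A rule: finite_induct)
  case empty then show ?case using lin_zero[OF assms(1)] by simp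
next
  case (insert a A)
  have "f (\<lambda>k. \<Sum>p\<in>insert a A. c p * v p k) = f (\<lambda>k. c a * v a k + (\<lambda>k. \<Sum>p\<in>A. c p * v p k) k)"
    using insert by simp
  also have "\<dots> = (\<lambda>j. c a * f (v a) j + f (\<lambda>k. \<Sum>p\<in>A. c p * v p k) j)"
    using lin_add[OF assms(1)] lin_smult[OF assms(1)] by simp
  finally show ?case using insert by simp
qed

lemma vec_expand: "(x::'i::finite \<Rightarrow> 'k::field) = (\<lambda>k. \<Sum>i\<in>UNIV. x i * unitv i k)"
  by (rule ext) (simp add: unitv_def if_distrib[of "\<lambda>z. _ * z"] cong: if_cong)

lemma lin_expand: "lin (f::('i::finite \<Rightarrow> 'k::field) \<Rightarrow> _) \<Longrightarrow> f x j = (\<Sum>i\<in>UNIV. x i * f (unitv i) j)"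
proof -
  assume l: "lin f"
  have "f x = f (\<lambda>k. \<Sum>i\<in>UNIV. x i * unitv i k)" using vec_expand[of x] by simp
  also have "\<dots> = (\<lambda>j. \<Sum>i\<in>UNIV. x i * f (unitv i) j)" by (rule lin_sum[OF l finite_UNIV])
  finally show ?thesis by simp
qed

lemma pair_lin: "lin f \<Longrightarrow> pair a (f x) = pair (dual_map f a) x"
  apply (simp add: pair_def dual_map_def lin_expand[of f x] sum_distrib_left sum_distrib_right)
  apply (subst sum.swap)
  apply (simp add: mult_ac)
  done

lemma dual_map_lin: "lin (dual_map f)"
  by (simp add: lin_def dual_map_def pair_def sum.distrib sum_distrib_left algebra_simps)

lemma dual_dual: assumes "lin f" shows "dual_map (dual_map f) = f"
proof (rule ext)+
  fix x i
  have "dual_map (dual_map f) x i = (\<Sum>j\<in>UNIV. x j * dual_map f (unitv i) j)"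
    by (simp add: dual_map_def pair_def)
  also have "\<dots> = (\<Sum>j\<in>UNIV. x j * f (unitv j) i)"
    by (simp add: dual_map_def)
  also have "\<dots> = f x i" using lin_expand[OF assms, of x i] by simp
  finally show "dual_map (dual_map f) x i = f x i" .
qed

lemma vec_eq_pair: "(\<And>t. pair t v = pair t w) \<Longrightarrow> v = w"
  by (rule ext) (metis pair_unit_l)

lemma pair_add_l: "pair (\<lambda>i. x i + y i) z = pair x z + pair y z"
  by (simp add: pair_def sum.distrib algebra_simps)
lemma pair_add_r: "pair z (\<lambda>i. x i + y i) = pair z x + pair z y"
  by (simp add: pair_def sum.distrib algebra_simps)
lemma pair_diff_l: "pair (\<lambda>i. x i - y i) z = pair x z - pair y z"
  by (simp add: pair_def sum_subtractf algebra_simps)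
lemma pair_diff_r: "pair z (\<lambda>i. x i - y i) = pair z x - pair z y"
  by (simp add: pair_def sum_subtractf algebra_simps)
lemma pair_neg_l: "pair (\<lambda>i. - x i) z = - pair x z"
  by (simp add: pair_def sum_negf)
lemma pair_neg_r: "pair z (\<lambda>i. - x i) = - pair z x"
  by (simp add: pair_def sum_negf)
lemma pair_smult_l: "pair (\<lambda>i. c * x i) z = c * pair x z"
  by (simp add: pair_def sum_distrib_left mult_ac)
lemma pair_smult_r: "pair z (\<lambda>i. c * x i) = c * pair z x"
  by (simp add: pair_def sum_distrib_left mult_ac)
lemma pair_zero_l[simp]: "pair (\<lambda>i. 0) z = 0"
  by (simp add: pair_def)
lemma pair_zero_r[simp]: "pair z (\<lambda>i. 0) = 0"
  by (simp add: pair_def)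
lemmas pair_lins = pair_add_l pair_add_r pair_diff_l pair_diff_r pair_neg_l pair_neg_r pair_smult_l pair_smult_r

lemma bilin_l: "bilin br \<Longrightarrow> lin (\<lambda>x. br x y)" by (simp add: bilin_def)
lemma bilin_r: "bilin br \<Longrightarrow> lin (br x)" by (simp add: bilin_def)



locale hl =
  fixes br :: "('i::finite \<Rightarrow> 'k::field) \<Rightarrow> ('i \<Rightarrow> 'k) \<Rightarrow> ('i \<Rightarrow> 'k)"
    and phi :: "('i \<Rightarrow> 'k) \<Rightarrow> ('i \<Rightarrow> 'k)"
  assumes HL: "hom_lie br phi" and WI: "weak_inv br phi"
begin

lemma HLs: "bilin br" "\<forall>x y. br x y = (\<lambda>i. - br y x i)" "lin phi"
  "\<forall>x y. phi (br x y) = br (phi x) (phi y)"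
  "\<forall>x y z. (\<lambda>i. br (phi x) (br y z) i + br (phi y) (br z x) i + br (phi z) (br x y) i) = (\<lambda>i. 0)"
  using HL unfolding hom_lie_def by blast+
lemma bl: "bilin br" using HLs by blast
lemma lin_l: "lin (\<lambda>x. br x y)" using bl by (simp add: bilin_def)
lemma lin_r: "lin (br x)" using bl by (simp add: bilin_def)
lemma skew: "br x y = (\<lambda>i. - br y x i)" using HLs(2) by blast
lemma lphi: "lin phi" using HLs by blast
lemma mult: "phi (br x y) = br (phi x) (phi y)" using HLs(4) by blast
lemma jac: "br (phi x) (br y z) i + br (phi y) (br z x) i + br (phi z) (br x y) i = 0"
proof -
  have "(\<lambda>i. br (phi x) (br y z) i + br (phi y) (br z x) i + br (phi z) (br x y) i) = (\<lambda>i. 0)"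
    using HLs(5) by blast
  then show ?thesis by (metis (mono_tags))
qed
lemma wi: "br (phi (phi x)) y = br x y" using WI unfolding weak_inv_def by blast
lemma wi2: "br x (phi (phi y)) = br x y"
  using skew[of x "phi (phi y)"] skew[of y x] wi[of y] by simp

lemma phi0[simp]: "phi (\<lambda>i. 0) = (\<lambda>i. 0)" using lin_zero[OF lphi] .
lemma br0l[simp]: "br (\<lambda>i. 0) y = (\<lambda>i. 0)" using lin_zero[OF lin_l] .
lemma br0r[simp]: "br x (\<lambda>i. 0) = (\<lambda>i. 0)" using lin_zero[OF lin_r] .

lemma pair_phi: "pair (dual_map phi a) x = pair a (phi x)"
  using pair_lin[OF lphi] by simp

lemma coad_dm: "coad br phi x a = (\<lambda>j. - dual_map (br (phi x)) a j)"
  by (simp add: coad_def dual_map_def)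

lemma pair_coad: "pair (coad br phi x a) y = - pair a (br (phi x) y)"
  by (simp add: coad_dm pair_neg_l pair_lin[OF lin_r])
lemma pair_coad': "pair y (coad br phi x a) = - pair a (br (phi x) y)"
  using pair_coad pair_sym by metis

lemma coad_lin_r: "lin (coad br phi x)"
  unfolding coad_dm lin_def using dual_map_lin[of "br (phi x)"]
  by (simp add: lin_def)
lemma coad_lin_l: "lin (\<lambda>x. coad br phi x a)"
proof -
  have "lin (\<lambda>x. br (phi x) y)" for y
    using lin_l lphi by (simp add: lin_def)
  then show ?thesis
    by (simp add: lin_def coad_def pair_lins)
qed

lemma coad0a[simp]: "coad br phi x (\<lambda>i. 0) = (\<lambda>i. 0)" by (simp add: coad_def)
lemma coad0x[simp]: "coad br phi (\<lambda>i. 0) a = (\<lambda>i. 0)" by (simp add: coad_def)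

lemma coad_phi: "dual_map phi (coad br phi x b) = coad br phi (phi x) (dual_map phi b)"
proof (rule vec_eq_pair)
  fix y
  have "pair (dual_map phi (coad br phi x b)) y = - pair b (br (phi x) (phi y))"
    by (simp add: pair_phi pair_coad)
  also have "\<dots> = - pair b (phi (br (phi (phi x)) y))" by (simp add: mult wi)
  also have "\<dots> = pair (coad br phi (phi x) (dual_map phi b)) y"
    by (simp add: pair_coad pair_phi)
  finally show "pair y (dual_map phi (coad br phi x b)) = pair y (coad br phi (phi x) (dual_map phi b))"
    by (metis pair_sym)
qed

lemma coad_wi: "coad br phi (phi (phi x)) a = coad br phi x a"
  by (simp add: coad_def wi)

lemma coad_wi2: "coad br phi x (dual_map phi (dual_map phi b)) = coad br phi x b"
proof (rule vec_eq_pair)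
  fix y
  have "pair (coad br phi x (dual_map phi (dual_map phi b))) y = - pair b (phi (phi (br (phi x) y)))"
    by (simp add: pair_coad pair_phi)
  also have "\<dots> = - pair b (br (phi x) y)"
    by (simp add: mult wi wi2)
  also have "\<dots> = pair (coad br phi x b) y" by (simp add: pair_coad)
  finally show "pair y (coad br phi x (dual_map phi (dual_map phi b))) = pair y (coad br phi x b)"
    by (metis pair_sym)
qed

lemma coad_rep: "(\<lambda>j. coad br phi (phi x) (coad br phi y c) j - coad br phi (phi y) (coad br phi x c) j
     - coad br phi (br x y) (dual_map phi c) j) = (\<lambda>j. 0)"
proof (rule vec_eq_pair)
  fix z
  have e1: "pair (coad br phi (phi x) (coad br phi y c)) z = pair c (br (phi y) (br x z))"
    by (simp add: pair_coad wi)
  have e2: "pair (coad br phi (phi y) (coad br phi x c)) z = pair c (br (phi x) (br y z))"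
    by (simp add: pair_coad wi)
  have e3: "pair (coad br phi (br x y) (dual_map phi c)) z = - pair c (br (br x y) (phi z))"
    by (simp add: pair_coad pair_phi mult wi wi2)
  have j: "br (phi y) (br x z) = (\<lambda>i. br (phi x) (br y z) i - br (br x y) (phi z) i)"
  proof (rule ext)
    fix i
    have a: "br (phi z) (br x y) i = - br (br x y) (phi z) i" by (subst skew) simp
    have b: "br z x = (\<lambda>i. - br x z i)" by (rule skew)
    have c: "br (phi y) (br z x) i = - br (phi y) (br x z) i" 
      by (simp add: b lin_neg[OF lin_r])
    show "br (phi y) (br x z) i = br (phi x) (br y z) i - br (br x y) (phi z) i"
      using jac[of x y z i] a c by (simp add: algebra_simps)
  qed
  have "pair (\<lambda>j. coad br phi (phi x) (coad br phi y c) j - coad br phi (phi y) (coad br phi x c) j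
     - coad br phi (br x y) (dual_map phi c) j) z = 0"
    by (simp add: pair_lins e1 e2 e3 j)
  then show "pair z (\<lambda>j. coad br phi (phi x) (coad br phi y c) j - coad br phi (phi y) (coad br phi x c) j
     - coad br phi (br x y) (dual_map phi c) j) = pair z (\<lambda>j. 0)"
    by (simp add: pair_sym[of z])
qed

end


definition TT :: "('i::finite \<Rightarrow> 'i \<Rightarrow> 'k::field) \<Rightarrow> ('i \<Rightarrow> 'k) \<Rightarrow> ('i \<Rightarrow> 'k) \<Rightarrow> 'k" where
  "TT t a b = (\<Sum>i\<in>UNIV. \<Sum>j\<in>UNIV. t i j * a i * b j)"

lemma TT_tmap: "TT (tmap f g t) a b = TT t (dual_map f a) (dual_map g b)"
proof -
  have "TT (tmap f g t) a b = (\<Sum>i\<in>UNIV. \<Sum>j\<in>UNIV. \<Sum>p\<in>UNIV. \<Sum>q\<in>UNIV. t p q * f (unitv p) i * g (unitv q) j * a i * b j)"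
    by (simp add: TT_def tmap_def sum_distrib_right)
  also have "\<dots> = (\<Sum>p\<in>UNIV. \<Sum>q\<in>UNIV. \<Sum>i\<in>UNIV. \<Sum>j\<in>UNIV. t p q * f (unitv p) i * g (unitv q) j * a i * b j)"
    by (rule sum4_swap)
  also have "\<dots> = TT t (dual_map f a) (dual_map g b)"
    by (simp add: TT_def dual_map_def pair_def sum_distrib_left sum_distrib_right mult_ac)
  finally show ?thesis .
qed

lemma TT_add: "TT (\<lambda>i j. s i j + t i j) a b = TT s a b + TT t a b"
  by (simp add: TT_def algebra_simps sum.distrib)
lemma TT_diff: "TT (\<lambda>i j. s i j - t i j) a b = TT s a b - TT t a b"
  by (simp add: TT_def algebra_simps sum_subtractf)
lemma TT_neg2: "TT t (\<lambda>i. - a i) b = - TT t a b"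
  by (simp add: TT_def sum_negf)
lemma TT_neg3: "TT t a (\<lambda>i. - b i) = - TT t a b"
  by (simp add: TT_def sum_negf)

lemma TT_adt: "TT (ad_t br phi z t) a b = TT t (dual_map (br z) a) (dual_map phi b) + TT t (dual_map phi a) (dual_map (br z) b)"
  by (simp add: ad_t_def TT_add TT_tmap)

lemma lin2_lin: "lin2 D \<Longrightarrow> lin (\<lambda>x pq. D x (fst pq) (snd pq))"
  by (simp add: lin_def lin2_def)

lemma lin2_expand: "lin2 (D::('i::finite \<Rightarrow> 'k::field) \<Rightarrow> _) \<Longrightarrow> D x p q = (\<Sum>i\<in>UNIV. x i * D (unitv i) p q)"
  using lin_expand[OF lin2_lin, of D x "(p,q)"] by simp

lemma pair_dual_br: "lin2 D \<Longrightarrow> pair (dual_br D a b) x = TT (D x) a b"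
  apply (simp add: pair_def dual_br_def TT_def lin2_expand[of D x] sum_distrib_left sum_distrib_right)
  apply (rule trans[OF sum.swap])
  apply (rule trans[OF sum_swap_in])
  apply (simp add: mult_ac)
  done

lemma gpart_mkd[simp]: "gpart (mkd x a) = x" by (simp add: gpart_def mkd_def)
lemma dpart_mkd[simp]: "dpart (mkd x a) = a" by (simp add: dpart_def mkd_def)
lemma mkd_parts: "mkd (gpart u) (dpart u) = u"
  by (rule ext) (simp add: mkd_def gpart_def dpart_def split: sum.split)
lemma mkd_eq: "mkd x a = mkd y b \<longleftrightarrow> x = y \<and> a = b"
  by (metis gpart_mkd dpart_mkd)
lemma mkd_add: "(\<lambda>s. mkd x a s + mkd y b s) = mkd (\<lambda>i. x i + y i) (\<lambda>i. a i + b i)"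
  by (rule ext) (simp add: mkd_def split: sum.split)
lemma mkd_smult: "(\<lambda>s. c * mkd x a s) = mkd (\<lambda>i. c * x i) (\<lambda>i. c * a i)"
  by (rule ext) (simp add: mkd_def split: sum.split)
lemma mkd_zero: "(\<lambda>s. 0) = mkd (\<lambda>i. 0) (\<lambda>i. 0)"
  by (rule ext) (simp add: mkd_def split: sum.split)
lemma gpart_add[simp]: "gpart (\<lambda>s. u s + v s) = (\<lambda>i. gpart u i + gpart v i)" by (simp add: gpart_def)
lemma dpart_add[simp]: "dpart (\<lambda>s. u s + v s) = (\<lambda>i. dpart u i + dpart v i)" by (simp add: dpart_def)
lemma gpart_smult[simp]: "gpart (\<lambda>s. c * u s) = (\<lambda>i. c * gpart u i)" by (simp add: gpart_def)
lemma dpart_smult[simp]: "dpart (\<lambda>s. c * u s) = (\<lambda>i. c * dpart u i)" by (simp add: dpart_def)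
lemma mkd_Inl[simp]: "mkd x a (Inl i) = x i" by (simp add: mkd_def)
lemma mkd_Inr[simp]: "mkd x a (Inr i) = a i" by (simp add: mkd_def)

lemma pair_mkd: "pair (mkd x a) (mkd y b) = pair x y + pair a b"
  by (simp add: pair_def sum_UNIV_Plus)

locale hlb =
  fixes br :: "('i::finite \<Rightarrow> 'k::field) \<Rightarrow> ('i \<Rightarrow> 'k) \<Rightarrow> ('i \<Rightarrow> 'k)"
    and phi :: "('i \<Rightarrow> 'k) \<Rightarrow> ('i \<Rightarrow> 'k)"
    and D :: "('i \<Rightarrow> 'k) \<Rightarrow> ('i \<Rightarrow> 'i \<Rightarrow> 'k)"
  assumes H: "hom_lie_bialg br phi D"
begin

lemma Hs: "hom_lie br phi" "weak_inv br phi" "lin2 D" "hom_lie (dual_br D) (dual_map phi)"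
  "weak_inv (dual_br D) (dual_map phi)"
  "\<forall>x y. D (br x y) = (\<lambda>i j. ad_t br phi (phi x) (D y) i j - ad_t br phi (phi y) (D x) i j)"
  using H unfolding hom_lie_bialg_def by blast+

sublocale g: hl br phi using Hs by (simp add: hl_def)
sublocale d: hl "dual_br D" "dual_map phi" using Hs by (simp add: hl_def)

lemma lD: "lin2 D" using Hs by blast
lemma cocy: "D (br x y) = (\<lambda>i j. ad_t br phi (phi x) (D y) i j - ad_t br phi (phi y) (D x) i j)"
  using Hs(6) by blast
lemma psipsi[simp]: "dual_map (dual_map phi) = phi" using dual_dual[OF g.lphi] .

abbreviation "psi \<equiv> dual_map phi"
abbreviation "cg \<equiv> coad br phi"
abbreviation "cd \<equiv> coad (dual_br D) (dual_map phi)"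

lemma pdb: "pair (dual_br D a b) x = TT (D x) a b" using pair_dual_br[OF lD] .

lemma dm_br: "dual_map (br (phi x)) c = (\<lambda>j. - cg x c j)"
  by (simp add: g.coad_dm)

lemma CO: "pair (dual_br D c b) (br x y) =
   - pair (dual_br D (cg x c) (psi b)) y - pair (dual_br D (psi c) (cg x b)) y
   + pair (dual_br D (cg y c) (psi b)) x + pair (dual_br D (psi c) (cg y b)) x"
  by (simp add: pdb cocy TT_diff TT_adt dm_br TT_neg2 TT_neg3)

end


context hlb begin

abbreviation "B \<equiv> dbr br phi D"
abbreviation "P \<equiv> dphi phi"

lemma dbr_mkd: "B (mkd x a) (mkd y b) = mkd (\<lambda>i. br x y i + cd a y i - cd b x i)
    (\<lambda>i. cg x b i - cg y a i + dual_br D a b i)"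
  by (simp add: dbr_def Let_def)
lemma dbr_def': "B u v = mkd (\<lambda>i. br (gpart u) (gpart v) i + cd (dpart u) (gpart v) i - cd (dpart v) (gpart u) i)
    (\<lambda>i. cg (gpart u) (dpart v) i - cg (gpart v) (dpart u) i + dual_br D (dpart u) (dpart v) i)"
  by (simp add: dbr_def Let_def)
lemma dphi_mkd: "P (mkd x a) = mkd (phi x) (psi a)"
  by (simp add: dphi_def)

lemmas linrules = lin_add[OF g.lin_r] lin_add[OF g.lin_l] lin_smult[OF g.lin_r] lin_smult[OF g.lin_l]
  lin_add[OF d.lin_r] lin_add[OF d.lin_l] lin_smult[OF d.lin_r] lin_smult[OF d.lin_l]
  lin_add[OF g.coad_lin_r] lin_add[OF g.coad_lin_l] lin_smult[OF g.coad_lin_r] lin_smult[OF g.coad_lin_l]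
  lin_add[OF d.coad_lin_r] lin_add[OF d.coad_lin_l] lin_smult[OF d.coad_lin_r] lin_smult[OF d.coad_lin_l]
  lin_add[OF g.lphi] lin_smult[OF g.lphi] lin_add[OF d.lphi] lin_smult[OF d.lphi]
lemmas negrules = lin_neg[OF g.lin_r] lin_neg[OF g.lin_l] lin_neg[OF d.lin_r] lin_neg[OF d.lin_l]
  lin_neg[OF g.coad_lin_r] lin_neg[OF g.coad_lin_l] lin_neg[OF d.coad_lin_r] lin_neg[OF d.coad_lin_l]
  lin_neg[OF g.lphi] lin_neg[OF d.lphi]

lemma B_lin_r: "lin (B u)"
  unfolding lin_def
  by (simp add: dbr_def' linrules mkd_add mkd_smult algebra_simps)
lemma B_lin_l: "lin (\<lambda>u. B u v)"
  unfolding lin_def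
  by (simp add: dbr_def' linrules mkd_add mkd_smult algebra_simps)
lemma B_bilin: "bilin B" using B_lin_r B_lin_l by (simp add: bilin_def)

lemma P_lin: "lin P"
  unfolding lin_def dphi_def by (simp add: linrules mkd_add mkd_smult)

lemma B_skew: "B u v = (\<lambda>s. - B v u s)"
proof -
  have "B u v = mkd (gpart (\<lambda>s. - B v u s)) (dpart (\<lambda>s. - B v u s))"
    apply (subst dbr_def')
    apply (simp add: gpart_def dpart_def dbr_def')
    apply (subst g.skew) apply (subst d.skew)
    apply (simp add: algebra_simps)
    done
  then show ?thesis by (simp add: mkd_parts)
qed


lemmas diffrules = lin_diff[OF g.lphi] lin_diff[OF d.lphi]
lemma phi_cd: "phi (cd a y) = cd (psi a) (phi y)"
  using d.coad_phi[of a y] by simp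
lemma cdwi2: "cd a (phi (phi y)) = cd a y"
  using d.coad_wi2[of a y] by simp

lemma P_mult_mkd: "P (B (mkd x a) (mkd y b)) = B (P (mkd x a)) (P (mkd y b))"
  by (simp add: dbr_mkd dphi_mkd linrules diffrules phi_cd g.coad_phi g.mult d.mult)

lemma P_mult: "P (B u v) = B (P u) (P v)"
  using P_mult_mkd[of "gpart u" "dpart u" "gpart v" "dpart v"] by (simp add: mkd_parts)

lemma B_wi: "B (P (P u)) v = B u v"
proof -
  have "B (P (P (mkd x a))) (mkd y b) = B (mkd x a) (mkd y b)" for x a y b
    by (simp add: dbr_mkd dphi_mkd g.wi d.wi g.coad_wi d.coad_wi g.coad_wi2 cdwi2)
  from this[of "gpart u" "dpart u" "gpart v" "dpart v"] show ?thesis by (simp add: mkd_parts)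
qed

end


lemma mkd_add3: "(\<lambda>s. mkd x a s + mkd y b s + mkd z c s) = mkd (\<lambda>i. x i + y i + z i) (\<lambda>i. a i + b i + c i)"
  by (rule ext) (simp add: mkd_def split: sum.split)

context hlb begin

definition "J u v w = (\<lambda>s. B (P u) (B v w) s + B (P v) (B w u) s + B (P w) (B u v) s)"

lemma h1: "pair b (br (phi x) (cd c y)) = pair (dual_br D (psi c) (cg x b)) y"
  using g.pair_coad[of x b "cd c y"] d.pair_coad'[of "cg x b" c y] pair_sym by (metis minus_equation_iff)
lemma h2: "pair b (cd a (phi x)) = - pair (dual_br D a (psi b)) x"
proof -
  have "pair b (cd a (phi x)) = - pair (phi x) (dual_br D (psi a) b)"
    using d.pair_coad'[of b a "phi x"] by simp
  also have "\<dots> = - pair (psi (dual_br D (psi a) b)) x" by (simp add: pair_sym[of "phi x"] g.pair_phi)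
  also have "\<dots> = - pair (dual_br D a (psi b)) x" by (simp add: d.mult d.wi)
  finally show ?thesis .
qed
lemma h3: "pair b (cd (psi c) z) = - pair (dual_br D c b) z"
  using d.pair_coad'[of b "psi c" z] by (simp add: d.wi pair_sym)

lemma Jggd: "J (mkd x (\<lambda>i. 0)) (mkd y (\<lambda>i. 0)) (mkd (\<lambda>i. 0) c) = (\<lambda>s. 0)"
proof -
  have G: "(\<lambda>i. (- br (phi x) (cd c y) i - cd (cg y c) (phi x) i) + (br (phi y) (cd c x) i + cd (cg x c) (phi y) i)
      + cd (psi c) (br x y) i) = (\<lambda>i. 0)"
  proof (rule vec_eq_pair)
    fix b
    show "pair b (\<lambda>i. (- br (phi x) (cd c y) i - cd (cg y c) (phi x) i) + (br (phi y) (cd c x) i + cd (cg x c) (phi y) i)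
      + cd (psi c) (br x y) i) = pair b (\<lambda>i. 0)"
      by (simp add: pair_lins h1 h2 h3 CO d.skew[of "cg x c"] d.skew[of "cg y c"])
  qed
  note H = g.coad_rep[of x y c]
  show ?thesis
    by (simp add: J_def dbr_mkd dphi_mkd negrules mkd_add3 G H mkd_zero)
qed


lemma h4: "pair (cg (cd c x) (psi b)) y = pair (dual_br D (psi c) (cg y b)) x"
proof -
  have "pair (cg (cd c x) (psi b)) y = - pair (psi b) (br (phi (cd c x)) y)" by (rule g.pair_coad)
  also have "\<dots> = - pair b (br (cd c x) (phi y))" by (simp add: g.pair_phi g.mult g.wi)
  also have "\<dots> = pair b (br (phi y) (cd c x))" by (subst g.skew) (simp add: pair_neg_r)
  also have "\<dots> = pair (dual_br D (psi c) (cg y b)) x" by (rule h1)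
  finally show ?thesis .
qed
lemma h5: "pair (cg (phi x) a) y = - pair a (br x y)"
  by (simp add: g.pair_coad g.wi)

lemma Jgdd: "J (mkd x (\<lambda>i. 0)) (mkd (\<lambda>i. 0) b) (mkd (\<lambda>i. 0) c) = (\<lambda>s. 0)"
proof -
  note G = d.coad_rep[of b c x, simplified]
  have H0: "pair (\<lambda>i. cg (phi x) (dual_br D b c) i - cg (cd c x) (psi b) i - dual_br D (psi b) (cg x c) i
     + cg (cd b x) (psi c) i + dual_br D (psi c) (cg x b) i) y = 0" for y
    by (simp add: pair_lins h4 h5 CO[of b c] d.skew[of "cg x b"] d.skew[of "cg y b"])
  have H: "(\<lambda>i. cg (phi x) (dual_br D b c) i - cg (cd c x) (psi b) i - dual_br D (psi b) (cg x c) i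
     + cg (cd b x) (psi c) i + dual_br D (psi c) (cg x b) i) = (\<lambda>i. 0)"
  proof (rule vec_eq_pair)
    fix t show "pair t (\<lambda>i. cg (phi x) (dual_br D b c) i - cg (cd c x) (psi b) i - dual_br D (psi b) (cg x c) i
     + cg (cd b x) (psi c) i + dual_br D (psi c) (cg x b) i) = pair t (\<lambda>i. 0)"
      using H0[of t] by (simp only: pair_sym[of t] pair_zero_l)
  qed
  have G': "(\<lambda>i. cd (psi b) (cd c x) i - cd (dual_br D b c) (phi x) i - cd (psi c) (cd b x) i) = (\<lambda>i. 0)"
  proof (rule ext)
    fix i show "cd (psi b) (cd c x) i - cd (dual_br D b c) (phi x) i - cd (psi c) (cd b x) i = 0"
      using fun_cong[OF G, of i] by (simp add: algebra_simps)
  qed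
  have H': "(\<lambda>i. cg (phi x) (dual_br D b c) i +
           (- cg (cd c x) (psi b) i - dual_br D (psi b) (cg x c) i) +
           (cg (cd b x) (psi c) i + dual_br D (psi c) (cg x b) i)) = (\<lambda>i. 0)"
  proof (rule ext)
    fix i show "cg (phi x) (dual_br D b c) i +
           (- cg (cd c x) (psi b) i - dual_br D (psi b) (cg x c) i) +
           (cg (cd b x) (psi c) i + dual_br D (psi c) (cg x b) i) = 0"
      using fun_cong[OF H, of i] by (simp add: algebra_simps)
  qed
  show ?thesis
    by (simp add: J_def dbr_mkd dphi_mkd negrules mkd_add3 G' H' mkd_zero)
qed


lemma Jggg: "J (mkd x (\<lambda>i. 0)) (mkd y (\<lambda>i. 0)) (mkd z (\<lambda>i. 0)) = (\<lambda>s. 0)"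
proof -
  have G: "(\<lambda>i. br (phi x) (br y z) i + br (phi y) (br z x) i + br (phi z) (br x y) i) = (\<lambda>i. 0)"
    using g.jac by auto
  show ?thesis by (simp add: J_def dbr_mkd dphi_mkd mkd_add3 G mkd_zero)
qed
lemma Jddd: "J (mkd (\<lambda>i. 0) a) (mkd (\<lambda>i. 0) b) (mkd (\<lambda>i. 0) c) = (\<lambda>s. 0)"
proof -
  have G: "(\<lambda>i. dual_br D (psi a) (dual_br D b c) i + dual_br D (psi b) (dual_br D c a) i + dual_br D (psi c) (dual_br D a b) i) = (\<lambda>i. 0)"
    using d.jac by auto
  show ?thesis by (simp add: J_def dbr_mkd dphi_mkd mkd_add3 G mkd_zero)
qed

lemma J_cyc: "J u v w = J v w u"
  by (simp add: J_def algebra_simps)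

lemma Jadd1: "J (\<lambda>s. u1 s + u2 s) v w = (\<lambda>s. J u1 v w s + J u2 v w s)"
  by (simp add: J_def lin_add[OF P_lin] lin_add[OF B_lin_l] lin_add[OF B_lin_r] algebra_simps)
lemma Jadd2: "J u (\<lambda>s. v1 s + v2 s) w = (\<lambda>s. J u v1 w s + J u v2 w s)"
  using Jadd1[of v1 v2 w u] J_cyc by metis
lemma Jadd3: "J u v (\<lambda>s. w1 s + w2 s) = (\<lambda>s. J u v w1 s + J u v w2 s)"
  using Jadd1[of w1 w2 u v] J_cyc by metis

lemma Jgdg: "J (mkd x (\<lambda>i. 0)) (mkd (\<lambda>i. 0) b) (mkd z (\<lambda>i. 0)) = (\<lambda>s. 0)"
  using Jggd[of z x b] J_cyc by metis
lemma Jdgg: "J (mkd (\<lambda>i. 0) a) (mkd y (\<lambda>i. 0)) (mkd z (\<lambda>i. 0)) = (\<lambda>s. 0)"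
  using Jggd[of y z a] J_cyc by metis
lemma Jdgd: "J (mkd (\<lambda>i. 0) a) (mkd y (\<lambda>i. 0)) (mkd (\<lambda>i. 0) c) = (\<lambda>s. 0)"
  using Jgdd[of y c a] J_cyc by metis
lemma Jddg: "J (mkd (\<lambda>i. 0) a) (mkd (\<lambda>i. 0) b) (mkd z (\<lambda>i. 0)) = (\<lambda>s. 0)"
  using Jgdd[of z a b] J_cyc by metis

lemma sp: "(\<lambda>s. mkd (gpart u) (\<lambda>i. 0) s + mkd (\<lambda>i. 0) (dpart u) s) = (u :: 'i + 'i \<Rightarrow> 'k)"
  by (rule ext) (simp add: mkd_def gpart_def dpart_def split: sum.split)

lemma J_zero: "J u v w = (\<lambda>s. 0)"
proof -
  have "J u v w = J (\<lambda>s. mkd (gpart u) (\<lambda>i. 0) s + mkd (\<lambda>i. 0) (dpart u) s)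
      (\<lambda>s. mkd (gpart v) (\<lambda>i. 0) s + mkd (\<lambda>i. 0) (dpart v) s)
      (\<lambda>s. mkd (gpart w) (\<lambda>i. 0) s + mkd (\<lambda>i. 0) (dpart w) s)"
    by (simp only: sp)
  also have "\<dots> = (\<lambda>s. 0)"
    apply (simp only: Jadd1 Jadd2 Jadd3)
    apply (simp only: Jggg Jddd Jggd Jgdd Jgdg Jdgg Jdgd Jddg)
    apply simp
    done
  finally show ?thesis .
qed

end


lemma dm_unit[simp]: "dual_map f (unitv k) i = f (unitv i) k"
  by (simp add: dual_map_def)

lemma unitv_Inl: "unitv (Inl i) = mkd (unitv i) (\<lambda>j. 0)"
  by (rule ext) (simp add: unitv_def mkd_def split: sum.split)
lemma unitv_Inr: "unitv (Inr i) = mkd (\<lambda>j. 0) (unitv i)"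
  by (rule ext) (simp add: unitv_def mkd_def split: sum.split)

lemma tmap_rcan: "tmap f g (rcan::('i::finite + 'i \<Rightarrow> 'i + 'i \<Rightarrow> 'k::field)) s t = (\<Sum>i\<in>UNIV. f (unitv (Inl i)) s * g (unitv (Inr i)) t)"
  by (simp add: tmap_def sum_UNIV_Plus rcan_def mult.assoc if_distrib[of "\<lambda>z. z * _"] cong: if_cong)

lemma lin_collapse: "lin (f::('i::finite \<Rightarrow> 'k::field) \<Rightarrow> _) \<Longrightarrow> (\<Sum>i\<in>UNIV. c i * f (unitv i) j) = f c j"
  using lin_expand[of f c j] by simp

context hlb begin

lemma Bu_El: "B (mkd x a) (unitv (Inl i)) = mkd (\<lambda>k. br x (unitv i) k + cd a (unitv i) k) (\<lambda>k. - cg (unitv i) a k)"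
  by (simp add: unitv_Inl dbr_mkd)
lemma Bu_Er: "B (mkd x a) (unitv (Inr i)) = mkd (\<lambda>k. - cd (unitv i) x k) (\<lambda>k. cg x (unitv i) k + dual_br D a (unitv i) k)"
  by (simp add: unitv_Inr dbr_mkd)
lemma P_El: "P (unitv (Inl i)) = mkd (phi (unitv i)) (\<lambda>k. 0)"
  by (simp add: unitv_Inl dphi_mkd)
lemma P_Er: "P (unitv (Inr i)) = mkd (\<lambda>k. 0) (psi (unitv i))"
  by (simp add: unitv_Inr dphi_mkd)

lemma dcobr_ll: "dcobr br phi D (mkd x a) (Inl k) (Inl l) = D x k l"
proof -
  have "dcobr br phi D (mkd x a) (Inl k) (Inl l) = (\<Sum>i\<in>UNIV. phi (unitv i) k * - cd (unitv i) x l)"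
    by (simp add: dcobr_def ad_t_def tmap_rcan Bu_El Bu_Er P_El P_Er)
  also have "\<dots> = - (\<Sum>i\<in>UNIV. psi (unitv k) i * cd (unitv i) x l)"
    by (simp add: sum_negf)
  also have "\<dots> = - cd (psi (unitv k)) x l"
    using lin_collapse[OF d.coad_lin_l] by metis
  also have "\<dots> = pair x (dual_br D (unitv k) (unitv l))"
    by (simp add: coad_def d.wi)
  also have "\<dots> = D x k l"
    by (simp add: pair_sym[of x] pdb TT_def unitv_def if_distrib[of "\<lambda>z. _ * z"] cong: if_cong)
  finally show ?thesis .
qed


lemma dcobr_rr: "dcobr br phi D (mkd x a) (Inr k) (Inr l) = - dual_cobr br a k l"
proof -
  have "dcobr br phi D (mkd x a) (Inr k) (Inr l) = (\<Sum>i\<in>UNIV. - cg (unitv i) a k * phi (unitv l) i)"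
    by (simp add: dcobr_def ad_t_def tmap_rcan Bu_El Bu_Er P_El P_Er)
  also have "\<dots> = - (\<Sum>i\<in>UNIV. phi (unitv l) i * cg (unitv i) a k)"
    by (simp add: sum_negf mult.commute)
  also have "\<dots> = - cg (phi (unitv l)) a k"
    using lin_collapse[OF g.coad_lin_l] by metis
  also have "\<dots> = pair a (br (unitv l) (unitv k))"
    by (simp add: coad_def g.wi)
  also have "\<dots> = - dual_cobr br a k l"
    by (subst g.skew) (simp add: dual_cobr_def pair_neg_r)
  finally show ?thesis .
qed

lemma dcobr_rl: "dcobr br phi D (mkd x a) (Inr k) (Inl l) = 0"
  by (simp add: dcobr_def ad_t_def tmap_rcan Bu_El Bu_Er P_El P_Er)

lemma dcobr_lr: "dcobr br phi D (mkd x a) (Inl k) (Inr l) = 0"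
proof -
  have "dcobr br phi D (mkd x a) (Inl k) (Inr l) =
     (\<Sum>i\<in>UNIV. phi (unitv l) i * br x (unitv i) k) + (\<Sum>i\<in>UNIV. phi (unitv l) i * cd a (unitv i) k)
   + (\<Sum>i\<in>UNIV. psi (unitv k) i * cg x (unitv i) l) + (\<Sum>i\<in>UNIV. psi (unitv k) i * dual_br D a (unitv i) l)"
    by (simp add: dcobr_def ad_t_def tmap_rcan Bu_El Bu_Er P_El P_Er sum.distrib algebra_simps)
  also have "\<dots> = br x (phi (unitv l)) k + cd a (phi (unitv l)) k + cg x (psi (unitv k)) l + dual_br D a (psi (unitv k)) l"
    by (simp only: lin_collapse[OF g.lin_r] lin_collapse[OF d.lin_r] lin_collapse[OF g.coad_lin_r] lin_collapse[OF d.coad_lin_r])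
  also have "cg x (psi (unitv k)) l = - br x (phi (unitv l)) k"
  proof -
    have "cg x (psi (unitv k)) l = - pair (psi (unitv k)) (br (phi x) (unitv l))" by (simp add: coad_def)
    also have "\<dots> = - br x (phi (unitv l)) k" by (simp add: g.pair_phi g.mult g.wi)
    finally show ?thesis .
  qed
  also have "cd a (phi (unitv l)) k = - dual_br D a (psi (unitv k)) l"
  proof -
    have "cd a (phi (unitv l)) k = - pair (phi (unitv l)) (dual_br D (psi a) (unitv k))" by (simp add: coad_def)
    also have "\<dots> = - pair (unitv l) (psi (dual_br D (psi a) (unitv k)))" by (simp add: pair_sym[of "phi _"] g.pair_phi[symmetric] pair_sym[of "unitv l"])
    also have "\<dots> = - dual_br D a (psi (unitv k)) l" by (simp add: d.mult d.wi)
    finally show ?thesis .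
  qed
  finally show ?thesis by (simp del: dm_unit)
qed

lemma dcobr_formula: "dcobr br phi D u s t = (case s of Inl k \<Rightarrow> (case t of Inl l \<Rightarrow> D (gpart u) k l | Inr l \<Rightarrow> 0)
   | Inr k \<Rightarrow> (case t of Inl l \<Rightarrow> 0 | Inr l \<Rightarrow> - dual_cobr br (dpart u) k l))"
  using dcobr_ll[of "gpart u" "dpart u"] dcobr_rr[of "gpart u" "dpart u"] dcobr_lr[of "gpart u" "dpart u"]
    dcobr_rl[of "gpart u" "dpart u"]
  by (simp add: mkd_parts split: sum.split)

end


definition sbr :: "(('i \<Rightarrow> 'k) \<Rightarrow> ('i \<Rightarrow> 'k) \<Rightarrow> ('i \<Rightarrow> 'k)) \<Rightarrow> (('i \<Rightarrow> 'k) \<Rightarrow> ('i \<Rightarrow> 'k) \<Rightarrow> ('i \<Rightarrow> 'k))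
   \<Rightarrow> ('i + 'i \<Rightarrow> 'k) \<Rightarrow> ('i + 'i \<Rightarrow> 'k) \<Rightarrow> ('i + 'i \<Rightarrow> 'k)" where
  "sbr b1 b2 u v = mkd (b1 (gpart u) (gpart v)) (b2 (dpart u) (dpart v))"
definition sphi :: "(('i \<Rightarrow> 'k) \<Rightarrow> ('i \<Rightarrow> 'k)) \<Rightarrow> (('i \<Rightarrow> 'k) \<Rightarrow> ('i \<Rightarrow> 'k))
   \<Rightarrow> ('i + 'i \<Rightarrow> 'k) \<Rightarrow> ('i + 'i \<Rightarrow> 'k)" where
  "sphi p1 p2 u = mkd (p1 (gpart u)) (p2 (dpart u))"

lemma hl_neg: assumes "hl br phi" shows "hl (\<lambda>x y i. - br x y i) phi"
proof -
  interpret hl br phi by fact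
  have bl': "bilin (\<lambda>x y i. - br x y i)"
    by (simp add: bilin_def lin_def lin_add[OF lin_r] lin_smult[OF lin_r] lin_add[OF lin_l] lin_smult[OF lin_l])
  have sk: "(\<lambda>i. - br x y i) = (\<lambda>i. - (- br y x i))" for x y
    by (subst skew) simp
  have mu: "phi (\<lambda>i. - br x y i) = (\<lambda>i. - br (phi x) (phi y) i)" for x y
    by (simp add: lin_neg[OF lphi] mult)
  have ja: "(\<lambda>i. - br (phi x) (\<lambda>i. - br y z i) i + - br (phi y) (\<lambda>i. - br z x i) i + - br (phi z) (\<lambda>i. - br x y i) i) = (\<lambda>i. 0)" for x y z
    by (simp add: lin_neg[OF lin_r] jac)
  have w: "(\<lambda>i. - br (phi (phi x)) y i) = (\<lambda>i. - br x y i)" for x y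
    by (simp add: wi)
  show ?thesis
    unfolding hl_def hom_lie_def weak_inv_def
    apply (intro conjI allI)
    using bl' lphi sk mu ja w by (auto simp only:)
qed

lemma hl_sum: assumes "hl b1 p1" "hl b2 p2" shows "hl (sbr b1 b2) (sphi p1 p2)"
proof -
  interpret A: hl b1 p1 by fact
  interpret C: hl b2 p2 by fact
  have bl: "bilin (sbr b1 b2)"
    by (simp add: bilin_def lin_def sbr_def lin_add[OF A.lin_r] lin_add[OF A.lin_l] lin_smult[OF A.lin_r] lin_smult[OF A.lin_l]
      lin_add[OF C.lin_r] lin_add[OF C.lin_l] lin_smult[OF C.lin_r] lin_smult[OF C.lin_l] mkd_add mkd_smult)
  have lp: "lin (sphi p1 p2)"
    by (simp add: lin_def sphi_def lin_add[OF A.lphi] lin_add[OF C.lphi] lin_smult[OF A.lphi] lin_smult[OF C.lphi] mkd_add mkd_smult)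
  have sk: "sbr b1 b2 x y = (\<lambda>i. - sbr b1 b2 y x i)" for x y
    by (rule ext) (simp add: sbr_def mkd_def split: sum.split, metis A.skew C.skew)
  have mu: "sphi p1 p2 (sbr b1 b2 x y) = sbr b1 b2 (sphi p1 p2 x) (sphi p1 p2 y)" for x y
    by (simp add: sphi_def sbr_def A.mult C.mult)
  have ja: "(\<lambda>i. sbr b1 b2 (sphi p1 p2 x) (sbr b1 b2 y z) i + sbr b1 b2 (sphi p1 p2 y) (sbr b1 b2 z x) i
       + sbr b1 b2 (sphi p1 p2 z) (sbr b1 b2 x y) i) = (\<lambda>i. 0)" for x y z
    by (simp add: sphi_def sbr_def mkd_add3 A.jac C.jac mkd_zero)
  have wi: "sbr b1 b2 (sphi p1 p2 (sphi p1 p2 x)) y = sbr b1 b2 x y" for x y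
    by (simp add: sphi_def sbr_def A.wi C.wi)
  show ?thesis unfolding hl_def hom_lie_def weak_inv_def
    using bl lp sk mu ja wi by blast
qed



lemma bilin_expand: "bilin (br::('i::finite \<Rightarrow> 'k::field) \<Rightarrow> _) \<Longrightarrow> br x y k = (\<Sum>i\<in>UNIV. \<Sum>j\<in>UNIV. x i * y j * br (unitv i) (unitv j) k)"
proof -
  assume b: "bilin br"
  have "br x y k = (\<Sum>i\<in>UNIV. x i * br (unitv i) y k)" using lin_expand[OF bilin_l[OF b], of x] by simp
  also have "\<dots> = (\<Sum>i\<in>UNIV. x i * (\<Sum>j\<in>UNIV. y j * br (unitv i) (unitv j) k))"
    by (rule sum.cong[OF refl]) (simp only: lin_expand[OF bilin_r[OF b], of _ y])
  finally show ?thesis by (simp add: sum_distrib_left mult_ac)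
qed

lemma pair_mkd': "pair u (mkd y b) = pair (gpart u) y + pair (dpart u) b"
  using pair_mkd[of "gpart u" "dpart u" y b] by (simp add: mkd_parts)

lemma pair_col: "lin (f::('i::finite \<Rightarrow> 'k::field) \<Rightarrow> _) \<Longrightarrow> pair (\<lambda>i. f (unitv i) k) x = f x k"
  by (simp add: pair_def lin_expand[of f x k] mult.commute)

context hlb begin

lemma D0[simp]: "D (\<lambda>i. 0) p q = 0"
proof -
  from lD have "\<forall>c x. D (\<lambda>i. c * x i) = (\<lambda>p q. c * D x p q)" unfolding lin2_def by blast
  from spec[OF spec[OF this, of 0], of "\<lambda>i. 0"] show ?thesis by simp
qed

lemma dual_dcobr: "dual_br (dcobr br phi D) = sbr (dual_br D) (\<lambda>x y i. - br x y i)"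
proof (intro ext)
  fix \<alpha> \<beta> :: "'i + 'i \<Rightarrow> 'k" and s
  show "dual_br (dcobr br phi D) \<alpha> \<beta> s = sbr (dual_br D) (\<lambda>x y i. - br x y i) \<alpha> \<beta> s"
  proof (cases s)
    case (Inl k)
    then show ?thesis
      apply (simp only: dual_br_def sum_UNIV_Plus unitv_Inl dcobr_formula)
      apply (simp add: sbr_def gpart_def dual_cobr_def dual_br_def)
      done
  next
    case (Inr k)
    have "dual_br (dcobr br phi D) \<alpha> \<beta> (Inr k) = (\<Sum>i\<in>UNIV. \<Sum>j\<in>UNIV. - dual_cobr br (unitv k) i j * \<alpha> (Inr i) * \<beta> (Inr j))"
      by (simp add: dual_br_def dcobr_formula sum_UNIV_Plus unitv_Inr)
    also have "\<dots> = - (\<Sum>i\<in>UNIV. \<Sum>j\<in>UNIV. dpart \<alpha> i * dpart \<beta> j * br (unitv i) (unitv j) k)"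
      by (simp add: dual_cobr_def dpart_def sum_negf mult_ac)
    also have "\<dots> = - br (dpart \<alpha>) (dpart \<beta>) k"
      using bilin_expand[OF g.bl, of "dpart \<alpha>" "dpart \<beta>" k] by simp
    finally show ?thesis using Inr by (simp add: sbr_def)
  qed
qed

lemma dual_P: "dual_map P = sphi psi phi"
proof (intro ext)
  fix \<alpha> :: "'i + 'i \<Rightarrow> 'k" and s
  show "dual_map P \<alpha> s = sphi psi phi \<alpha> s"
  proof (cases s)
    case (Inl k)
    then show ?thesis
      apply (simp only: dual_map_def unitv_Inl dphi_mkd pair_mkd' sphi_def mkd_Inl)
      apply simp
      done
  next
    case (Inr k)
    have "dual_map P \<alpha> (Inr k) = pair \<alpha> (mkd (\<lambda>i. 0) (psi (unitv k)))"
      by (simp add: dual_map_def unitv_Inr dphi_mkd del: dm_unit)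
    also have "\<dots> = pair (psi (unitv k)) (dpart \<alpha>)"
      by (simp only: pair_mkd' pair_zero_r add_0_left pair_sym[of "dpart \<alpha>"])
    also have "\<dots> = phi (dpart \<alpha>) k"
      by (simp add: g.pair_phi del: dm_unit)
    finally show ?thesis using Inr by (simp add: sphi_def)
  qed
qed

lemma dual_double_hl: "hl (dual_br (dcobr br phi D)) (dual_map P)"
  unfolding dual_dcobr dual_P
  by (rule hl_sum[OF d.hl_axioms hl_neg[OF g.hl_axioms]])

end


lemma tmap_TT: "tmap f g t s s' = TT t (\<lambda>p. f (unitv p) s) (\<lambda>q. g (unitv q) s')"
  by (simp add: tmap_def TT_def mult_ac)
lemma TT_units: "TT t (unitv k) (unitv l) = t k l"
  by (simp add: TT_def unitv_def if_distrib[of "\<lambda>z. _ * z"] cong: if_cong)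
lemma TT_zero2: "TT t (\<lambda>i. 0) b = 0" by (simp add: TT_def)
lemma TT_zero3: "TT t a (\<lambda>i. 0) = 0" by (simp add: TT_def)
lemma TT_neg1: "TT (\<lambda>i j. - t i j) a b = - TT t a b"
  by (simp add: TT_def sum_negf)
lemma TT_dual_cobr: "bilin br \<Longrightarrow> TT (dual_cobr br a) x y = pair a (br x y)"
  apply (simp add: TT_def dual_cobr_def pair_def bilin_expand[of br x y] sum_distrib_left sum_distrib_right mult_ac)
  apply (rule trans[OF sum_swap_in])
  apply (rule trans[OF sum.swap])
  apply (simp add: mult_ac)
  done

context hlb begin

lemma col_psi: "(\<lambda>p. phi (unitv p) k) = psi (unitv k)"
  by (rule ext) simp
lemma col_phi: "(\<lambda>p. psi (unitv p) k) = phi (unitv k)"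
  by (rule ext) (simp add: dual_map_def)

lemma lin2_dcobr: "lin2 (dcobr br phi D)"
proof -
  have Dadd: "D (\<lambda>i. x i + y i) = (\<lambda>p q. D x p q + D y p q)" for x y using lD by (simp add: lin2_def)
  have Dsm: "D (\<lambda>i. c * x i) = (\<lambda>p q. c * D x p q)" for c x using lD by (simp add: lin2_def)
  show ?thesis
    unfolding lin2_def
    by (auto intro!: ext simp: dcobr_formula Dadd Dsm dual_cobr_def pair_add_l pair_smult_l split: sum.split)
qed


lemma inj_g_hom: "bialg_hom br phi D B P (dcobr br phi D) (inj_g phi)"
proof -
  have l: "lin (inj_g phi)"
    by (simp add: lin_def inj_g_def lin_add[OF g.lphi] lin_smult[OF g.lphi] mkd_add mkd_smult)
  have b: "inj_g phi (br x y) = B (inj_g phi x) (inj_g phi y)" for x y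
    by (simp add: inj_g_def dbr_mkd g.mult)
  have p: "inj_g phi (phi x) = P (inj_g phi x)" for x
    by (simp add: inj_g_def dphi_mkd)
  have c: "tmap (inj_g phi) (inj_g phi) (D x) = dcobr br phi D (inj_g phi x)" for x
  proof (intro ext)
    fix s t
    show "tmap (inj_g phi) (inj_g phi) (D x) s t = dcobr br phi D (inj_g phi x) s t"
    proof (cases s; cases t)
      fix k l assume st: "s = Inl k" "t = Inl l"
      have "tmap (inj_g phi) (inj_g phi) (D x) s t = TT (D x) (psi (unitv k)) (psi (unitv l))"
        by (simp add: st tmap_TT inj_g_def col_psi del: dm_unit)
      also have "\<dots> = pair (psi (dual_br D (unitv k) (unitv l))) x"
        by (simp add: pdb d.mult del: dm_unit)
      also have "\<dots> = D (phi x) k l"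
        by (simp add: g.pair_phi pdb TT_units del: dm_unit)
      finally show ?thesis by (simp add: st inj_g_def dcobr_formula)
    next
      fix k l assume st: "s = Inl k" "t = Inr l"
      then show ?thesis by (simp add: tmap_TT inj_g_def TT_zero3 dcobr_formula)
    next
      fix k l assume st: "s = Inr k" "t = Inl l"
      then show ?thesis by (simp add: tmap_TT inj_g_def TT_zero2 dcobr_formula)
    next
      fix k l assume st: "s = Inr k" "t = Inr l"
      then show ?thesis by (simp add: tmap_TT inj_g_def TT_zero2 dcobr_formula dual_cobr_def)
    qed
  qed
  show ?thesis unfolding bialg_hom_def using l b p c by blast
qed

lemma inj_d_hom: "bialg_hom (dual_br D) psi (\<lambda>a i j. - dual_cobr br a i j) B P (dcobr br phi D) (inj_d phi)"
proof -
  have l: "lin (inj_d phi)"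
    by (simp add: lin_def inj_d_def lin_add[OF d.lphi] lin_smult[OF d.lphi] mkd_add mkd_smult)
  have b: "inj_d phi (dual_br D x y) = B (inj_d phi x) (inj_d phi y)" for x y
    by (simp add: inj_d_def dbr_mkd d.mult)
  have p: "inj_d phi (psi x) = P (inj_d phi x)" for x
    by (simp add: inj_d_def dphi_mkd)
  have c: "tmap (inj_d phi) (inj_d phi) (\<lambda>i j. - dual_cobr br a i j) = dcobr br phi D (inj_d phi a)" for a
  proof (intro ext)
    fix s t
    show "tmap (inj_d phi) (inj_d phi) (\<lambda>i j. - dual_cobr br a i j) s t = dcobr br phi D (inj_d phi a) s t"
    proof (cases s; cases t)
      fix k l assume st: "s = Inr k" "t = Inr l"
      have "tmap (inj_d phi) (inj_d phi) (\<lambda>i j. - dual_cobr br a i j) s t = - TT (dual_cobr br a) (phi (unitv k)) (phi (unitv l))"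
        by (simp add: st tmap_TT inj_d_def col_phi TT_neg1 del: dm_unit)
      also have "\<dots> = - pair a (phi (br (unitv k) (unitv l)))"
        by (simp add: TT_dual_cobr[OF g.bl] g.mult)
      also have "\<dots> = - dual_cobr br (psi a) k l"
        by (simp add: g.pair_phi[symmetric] dual_cobr_def del: dm_unit)
      finally show ?thesis by (simp add: st inj_d_def dcobr_formula del: dm_unit)
    next
      fix k l assume st: "s = Inl k" "t = Inr l"
      then show ?thesis by (simp add: tmap_TT inj_d_def TT_zero2 dcobr_formula)
    next
      fix k l assume st: "s = Inr k" "t = Inl l"
      then show ?thesis by (simp add: tmap_TT inj_d_def TT_zero3 dcobr_formula)
    next
      fix k l assume st: "s = Inl k" "t = Inl l"
      then show ?thesis by (simp add: tmap_TT inj_d_def TT_zero2 dcobr_formula)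
    qed
  qed
  show ?thesis unfolding bialg_hom_def using l b p c by blast
qed

end


lemma dm_col: "lin (f::('i::finite \<Rightarrow> 'k::field) \<Rightarrow> _) \<Longrightarrow> dual_map h (\<lambda>p. f (unitv p) i) = (\<lambda>p'. f (h (unitv p')) i)"
  by (rule ext) (simp add: dual_map_def pair_def lin_expand[of f "h (unitv _)" i] mult.commute)

lemma sum_unitv1[simp]: "(\<Sum>i\<in>UNIV. (f::'i::finite \<Rightarrow> 'k::field) i * unitv i l) = f l"
  by (simp add: unitv_def if_distrib[of "\<lambda>z. _ * z"] cong: if_cong)
lemma sum_unitv2[simp]: "(\<Sum>i\<in>UNIV. unitv i l * (f::'i::finite \<Rightarrow> 'k::field) i) = f l"
  by (simp add: unitv_def if_distrib[of "\<lambda>z. z * _"] cong: if_cong)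
lemma sum_unitv3[simp]: "(\<Sum>i\<in>UNIV. (f::'i::finite \<Rightarrow> 'k::field) i * unitv l i) = f l"
  by (simp add: unitv_def if_distrib[of "\<lambda>z. _ * z"] cong: if_cong)
lemma sum_unitv4[simp]: "(\<Sum>i\<in>UNIV. unitv l i * (f::'i::finite \<Rightarrow> 'k::field) i) = f l"
  by (simp add: unitv_def if_distrib[of "\<lambda>z. z * _"] cong: if_cong)

lemma tmap_comp:
  fixes f g h k :: "('i::finite \<Rightarrow> 'k::field) \<Rightarrow> ('i \<Rightarrow> 'k)"
  assumes "lin f" "lin g"
  shows "tmap f g (tmap h k t) = tmap (\<lambda>v. f (h v)) (\<lambda>v. g (k v)) t"
proof (intro ext)
  fix a b
  have "tmap f g (tmap h k t) a b = TT (tmap h k t) (\<lambda>p. f (unitv p) a) (\<lambda>q. g (unitv q) b)"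
    by (rule tmap_TT)
  also have "\<dots> = TT t (dual_map h (\<lambda>p. f (unitv p) a)) (dual_map k (\<lambda>q. g (unitv q) b))"
    by (rule TT_tmap)
  also have "\<dots> = TT t (\<lambda>p. f (h (unitv p)) a) (\<lambda>q. g (k (unitv q)) b)"
    by (simp only: dm_col[OF assms(1)] dm_col[OF assms(2)])
  also have "\<dots> = tmap (\<lambda>v. f (h v)) (\<lambda>v. g (k v)) t a b"
    by (rule tmap_TT[symmetric])
  finally show "tmap f g (tmap h k t) a b = tmap (\<lambda>v. f (h v)) (\<lambda>v. g (k v)) t a b" .
qed

lemma tmap_add_t: "tmap f g (\<lambda>i j. s i j + t i j) = (\<lambda>a b. tmap f g s a b + tmap f g t a b)"
  by (intro ext) (simp add: tmap_def sum.distrib algebra_simps)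
lemma tmap_diff_f: "tmap (\<lambda>v i. f v i - f' v i) g t = (\<lambda>a b. tmap f g t a b - tmap f' g t a b)"
  by (intro ext) (simp add: tmap_def sum_subtractf algebra_simps)
lemma tmap_diff_g: "tmap g (\<lambda>v i. f v i - f' v i) t = (\<lambda>a b. tmap g f t a b - tmap g f' t a b)"
  by (intro ext) (simp add: tmap_def sum_subtractf algebra_simps)

context hlb begin

abbreviation "r \<equiv> (rcan :: 'i + 'i \<Rightarrow> 'i + 'i \<Rightarrow> 'k)"

lemma PP_r1: "tmap P P r = tmap (\<lambda>v. P (P v)) (\<lambda>v. v) r"
proof (intro ext)
  fix s t
  show "tmap P P r s t = tmap (\<lambda>v. P (P v)) (\<lambda>v. v) r s t"
  proof (cases s; cases t)
    fix k l assume st: "s = Inl k" "t = Inr l"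
    have "tmap P P r s t = (\<Sum>i\<in>UNIV. phi (unitv l) i * phi (unitv i) k)"
      by (simp add: st tmap_rcan P_El P_Er mult.commute)
    also have "\<dots> = phi (phi (unitv l)) k" by (rule lin_collapse[OF g.lphi])
    also have "\<dots> = tmap (\<lambda>v. P (P v)) (\<lambda>v. v) r s t"
      by (simp add: st tmap_rcan unitv_Inl unitv_Inr dphi_mkd)
    finally show ?thesis .
  qed (simp_all add: tmap_rcan P_El P_Er unitv_Inl unitv_Inr dphi_mkd)
qed

lemma PP_r2: "tmap P P r = tmap (\<lambda>v. v) (\<lambda>v. P (P v)) r"
proof (intro ext)
  fix s t
  show "tmap P P r s t = tmap (\<lambda>v. v) (\<lambda>v. P (P v)) r s t"
  proof (cases s; cases t)
    fix k l assume st: "s = Inl k" "t = Inr l"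
    have "tmap P P r s t = (\<Sum>i\<in>UNIV. phi (unitv l) i * phi (unitv i) k)"
      by (simp add: st tmap_rcan P_El P_Er mult.commute)
    also have "\<dots> = phi (phi (unitv l)) k" by (rule lin_collapse[OF g.lphi])
    also have "\<dots> = pair (unitv k) (phi (phi (unitv l)))" by simp
    also have "\<dots> = pair (psi (unitv k)) (phi (unitv l))" by (rule g.pair_phi[symmetric])
    also have "\<dots> = psi (psi (unitv k)) l"
      by (simp only: dual_map_def[of phi "dual_map phi (unitv k)"])
    also have "\<dots> = tmap (\<lambda>v. v) (\<lambda>v. P (P v)) r s t"
      by (simp add: st tmap_rcan unitv_Inl unitv_Inr dphi_mkd del: dm_unit)
    finally show ?thesis .
  qed (simp_all add: tmap_rcan P_El P_Er unitv_Inl unitv_Inr dphi_mkd)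
qed


lemma Bw_PP: "B w (P (P y)) = B w y"
proof -
  have "B w (P (P y)) = (\<lambda>s. - B (P (P y)) w s)" by (rule B_skew)
  also have "\<dots> = (\<lambda>s. - B y w s)" by (simp only: B_wi)
  also have "\<dots> = B w y" by (rule B_skew[symmetric])
  finally show ?thesis .
qed

lemma Jac2: "B (P u) (B v y) s - B (P v) (B u y) s = B (B u v) (P y) s"
proof -
  have j: "B (P u) (B v y) s + B (P v) (B y u) s + B (P y) (B u v) s = 0"
    using fun_cong[OF J_zero[of u v y], of s] by (simp add: J_def)
  have a: "B (P v) (B y u) s = - B (P v) (B u y) s"
    by (subst B_skew[of y u]) (simp add: lin_neg[OF B_lin_r])
  have b: "B (P y) (B u v) s = - B (B u v) (P y) s"
    by (subst B_skew) simp
  show ?thesis using j a b by (simp add: algebra_simps)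
qed

lemma dcobr_ad: "dcobr br phi D u = (\<lambda>i j. tmap (B u) P r i j + tmap P (B u) r i j)"
  by (simp add: dcobr_def ad_t_def)

lemma A1: "tmap (B (P u)) P (dcobr br phi D v) = (\<lambda>i j. tmap (\<lambda>y. B (P u) (B v y)) (\<lambda>y. P (P y)) r i j
    + tmap (\<lambda>y. B (P u) (P y)) (\<lambda>y. B (P v) (P y)) r i j)"
  by (simp add: dcobr_ad tmap_add_t tmap_comp[OF B_lin_r P_lin] P_mult)
lemma A2: "tmap P (B (P u)) (dcobr br phi D v) = (\<lambda>i j. tmap (\<lambda>y. B (P v) (P y)) (\<lambda>y. B (P u) (P y)) r i j
    + tmap (\<lambda>y. P (P y)) (\<lambda>y. B (P u) (B v y)) r i j)"
  by (simp add: dcobr_ad tmap_add_t tmap_comp[OF P_lin B_lin_r] P_mult)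

lemma E1: "tmap (\<lambda>y. B (P u) (B v y)) (\<lambda>y. P (P y)) r i j - tmap (\<lambda>y. B (P v) (B u y)) (\<lambda>y. P (P y)) r i j
   = tmap (B (B u v)) P r i j"
proof -
  have "tmap (\<lambda>y. B (P u) (B v y)) (\<lambda>y. P (P y)) r i j - tmap (\<lambda>y. B (P v) (B u y)) (\<lambda>y. P (P y)) r i j
     = tmap (\<lambda>y s. B (P u) (B v y) s - B (P v) (B u y) s) (\<lambda>y. P (P y)) r i j"
    by (simp add: tmap_diff_f)
  also have "\<dots> = tmap (\<lambda>y. B (B u v) (P y)) (\<lambda>y. P (P y)) r i j"
    by (simp add: Jac2)
  also have "\<dots> = tmap (B (B u v)) P (tmap P P r) i j"
    by (simp add: tmap_comp[OF B_lin_r P_lin])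
  also have "\<dots> = tmap (B (B u v)) P (tmap (\<lambda>v. P (P v)) (\<lambda>v. v) r) i j"
    by (simp only: PP_r1)
  also have "\<dots> = tmap (B (B u v)) P r i j"
    by (simp add: tmap_comp[OF B_lin_r P_lin] Bw_PP)
  finally show ?thesis .
qed

lemma E4: "tmap (\<lambda>y. P (P y)) (\<lambda>y. B (P u) (B v y)) r i j - tmap (\<lambda>y. P (P y)) (\<lambda>y. B (P v) (B u y)) r i j
   = tmap P (B (B u v)) r i j"
proof -
  have "tmap (\<lambda>y. P (P y)) (\<lambda>y. B (P u) (B v y)) r i j - tmap (\<lambda>y. P (P y)) (\<lambda>y. B (P v) (B u y)) r i j
     = tmap (\<lambda>y. P (P y)) (\<lambda>y s. B (P u) (B v y) s - B (P v) (B u y) s) r i j"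
    by (simp add: tmap_diff_g)
  also have "\<dots> = tmap (\<lambda>y. P (P y)) (\<lambda>y. B (B u v) (P y)) r i j"
    by (simp add: Jac2)
  also have "\<dots> = tmap P (B (B u v)) (tmap P P r) i j"
    by (simp add: tmap_comp[OF P_lin B_lin_r])
  also have "\<dots> = tmap P (B (B u v)) (tmap (\<lambda>v. v) (\<lambda>v. P (P v)) r) i j"
    by (simp only: PP_r2)
  also have "\<dots> = tmap P (B (B u v)) r i j"
    by (simp add: tmap_comp[OF P_lin B_lin_r] Bw_PP)
  finally show ?thesis .
qed

lemma cocycle_double: "dcobr br phi D (B u v) = (\<lambda>i j. ad_t B P (P u) (dcobr br phi D v) i j - ad_t B P (P v) (dcobr br phi D u) i j)"
proof (intro ext)
  fix i j
  show "dcobr br phi D (B u v) i j = ad_t B P (P u) (dcobr br phi D v) i j - ad_t B P (P v) (dcobr br phi D u) i j"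
    using E1[of u v i j] E4[of u v i j]
    by (simp add: ad_t_def A1 A2 dcobr_ad[of "B u v"] algebra_simps)
qed

end

context hlb begin

lemma final: "hom_lie_bialg B P (dcobr br phi D)
       \<and> bialg_hom br phi D B P (dcobr br phi D) (inj_g phi)
       \<and> bialg_hom (dual_br D) psi (\<lambda>a i j. - dual_cobr br a i j) B P (dcobr br phi D) (inj_d phi)"
proof -
  have jac: "(\<lambda>i. B (P x) (B y z) i + B (P y) (B z x) i + B (P z) (B x y) i) = (\<lambda>i. 0)" for x y z
    using J_zero[of x y z] by (simp add: J_def)
  have hlB: "hom_lie B P"
    unfolding hom_lie_def using B_bilin B_skew P_lin P_mult jac by blast
  have wiB: "weak_inv B P"
    unfolding weak_inv_def using B_wi by blast
  have dh: "hom_lie (dual_br (dcobr br phi D)) (dual_map P)" "weak_inv (dual_br (dcobr br phi D)) (dual_map P)"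
    using dual_double_hl by (simp_all add: hl_def)
  have "hom_lie_bialg B P (dcobr br phi D)"
    unfolding hom_lie_bialg_def using hlB wiB lin2_dcobr dh cocycle_double by blast
  then show ?thesis using inj_g_hom inj_d_hom by blast
qed

end

theorem mainTheorem3:
  fixes br :: "('i::finite \<Rightarrow> 'k::field) \<Rightarrow> ('i \<Rightarrow> 'k) \<Rightarrow> ('i \<Rightarrow> 'k)"
    and phi :: "('i \<Rightarrow> 'k) \<Rightarrow> ('i \<Rightarrow> 'k)"
    and D :: "('i \<Rightarrow> 'k) \<Rightarrow> ('i \<Rightarrow> 'i \<Rightarrow> 'k)"
  assumes "hom_lie_bialg br phi D"
  shows "hom_lie_bialg (dbr br phi D) (dphi phi) (dcobr br phi D)
       \<and> bialg_hom br phi D (dbr br phi D) (dphi phi) (dcobr br phi D) (inj_g phi)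
       \<and> bialg_hom (dual_br D) (dual_map phi) (\<lambda>a i j. - dual_cobr br a i j)
                   (dbr br phi D) (dphi phi) (dcobr br phi D) (inj_d phi)"
proof -
  interpret hlb br phi D by (rule hlb.intro) (rule assms)
  show ?thesis by (rule final)
qed

end
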